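(* Let $q=p^r$ be odd and $n\ge 1$. Let: - $g\in\mathbb{F}_q[x_1,\dots,x_n]$ be a polynomial of total degree $n(q-1)/2$; - $f\in\mathbb{F}_q[y]$ be a permutation polynomial of degree $q-2$; - $a\in\mathbb{F}_q$ be a non-square. Then $$h(x_1,\dots,x_n,y)=\bigl(g(x_1,\dots,x_n)^2-a\bigr)f(y)$$ is a permutation polynomial in $\mathbb{F}_q[x_1,\dots,x_n,y]$.
   Context: $\mathbb{F}_q$ is the finite field with $q=p^r$ elements. A polynomial in $m$ variables over $\mathbb{F}_q$ is a permutation polynomial (PP) if, for every $c\in\mathbb{F}_q$, the equation $h=c$ has exactly $q^{m-1}$ solutions in $\mathbb{F}_q^m$. A univariate PP is a polynomial inducing a bijection of $\mathbb{F}_q$. *)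

theory Defs
  imports "HOL-Library.Poly_Mapping" "HOL-Library.FuncSet"
    "HOL-Computational_Algebra.Polynomial"
begin

text \<open>Multivariate polynomials over a ring 'a in variables x_0, x_1, ...:
  finitely supported maps from monomials (exponent vectors nat =>0 nat) to coefficients.\<close>
type_synonym 'a mpoly = "(nat \<Rightarrow>\<^sub>0 nat) \<Rightarrow>\<^sub>0 'a"

definition mpoly_eval :: "'a::comm_semiring_1 mpoly \<Rightarrow> (nat \<Rightarrow> 'a) \<Rightarrow> 'a" where
  "mpoly_eval p x =
     (\<Sum>m\<in>Poly_Mapping.keys p. Poly_Mapping.lookup p m *
        (\<Prod>i\<in>Poly_Mapping.keys m. x i ^ Poly_Mapping.lookup m i))"

definition total_degree :: "'a::zero mpoly \<Rightarrow> nat" where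
  "total_degree p = Max (insert 0
     ((\<lambda>m. \<Sum>i\<in>Poly_Mapping.keys m. Poly_Mapping.lookup m i) ` Poly_Mapping.keys p))"

definition mpoly_in_vars :: "nat \<Rightarrow> 'a::zero mpoly \<Rightarrow> bool" where
  "mpoly_in_vars n p \<longleftrightarrow> (\<forall>m\<in>Poly_Mapping.keys p. Poly_Mapping.keys m \<subseteq> {..<n})"

definition mpoly_const :: "'a::zero \<Rightarrow> 'a mpoly" where
  "mpoly_const c = Poly_Mapping.single 0 c"

definition poly_in_var :: "nat \<Rightarrow> 'a::comm_semiring_1 poly \<Rightarrow> 'a mpoly" where
  "poly_in_var k f = (\<Sum>i\<le>degree f. Poly_Mapping.single (Poly_Mapping.single k i) (coeff f i))"

text \<open>Permutation polynomial in m variables x_0..x_(m-1) over finite field 'a: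
  each value c is attained at exactly q^(m-1) points of F_q^m.\<close>
definition is_mpp :: "nat \<Rightarrow> 'a::{finite,field} mpoly \<Rightarrow> bool" where
  "is_mpp m h \<longleftrightarrow> (\<forall>c::'a.
     card {x \<in> PiE {..<m} (\<lambda>_. UNIV). mpoly_eval h x = c} = card (UNIV::'a set) ^ (m - 1))"

definition is_pp :: "'a::{finite,field} poly \<Rightarrow> bool" where
  "is_pp f \<longleftrightarrow> bij (poly f)"

end

theory Submission imports Defs begin

definition mon_ev :: "(nat \<Rightarrow>\<^sub>0 nat) \<Rightarrow> (nat \<Rightarrow> 'a::comm_semiring_1) \<Rightarrow> 'a" where
  "mon_ev m x = (\<Prod>i\<in>Poly_Mapping.keys m. x i ^ Poly_Mapping.lookup m i)"

lemma mon_ev_superset: "finite S \<Longrightarrow> Poly_Mapping.keys m \<subseteq> S \<Longrightarrow>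
   mon_ev m x = (\<Prod>i\<in>S. x i ^ Poly_Mapping.lookup m i)"
  unfolding mon_ev_def
  by (rule prod.mono_neutral_left) (auto simp: in_keys_iff)

lemma mon_ev_add: "mon_ev (m1 + m2) x = mon_ev m1 x * (mon_ev m2 (x::nat \<Rightarrow> 'a::comm_semiring_1))"
proof -
  let ?S = "Poly_Mapping.keys m1 \<union> Poly_Mapping.keys m2"
  have "mon_ev (m1 + m2) x = (\<Prod>i\<in>?S. x i ^ Poly_Mapping.lookup (m1+m2) i)"
    by (rule mon_ev_superset) (auto simp: keys_add)
  also have "\<dots> = (\<Prod>i\<in>?S. x i ^ Poly_Mapping.lookup m1 i) * (\<Prod>i\<in>?S. x i ^ Poly_Mapping.lookup m2 i)"
    by (simp add: lookup_add power_add prod.distrib)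
  also have "\<dots> = mon_ev m1 x * mon_ev m2 x"
    using mon_ev_superset[of ?S m1 x] mon_ev_superset[of ?S m2 x] by simp
  finally show ?thesis .
qed

lemma ev_superset: "finite S \<Longrightarrow> Poly_Mapping.keys p \<subseteq> S \<Longrightarrow>
   mpoly_eval p x = (\<Sum>m\<in>S. Poly_Mapping.lookup p m * mon_ev m x)"
  unfolding mpoly_eval_def mon_ev_def[symmetric]
  by (rule sum.mono_neutral_left) (auto simp: in_keys_iff)

lemma ev_add: "mpoly_eval (p + q) x = mpoly_eval p x + mpoly_eval q (x::nat \<Rightarrow> 'a::comm_semiring_1)"
proof -
  let ?S = "Poly_Mapping.keys p \<union> Poly_Mapping.keys q"
  have "mpoly_eval (p + q) x = (\<Sum>m\<in>?S. Poly_Mapping.lookup (p+q) m * mon_ev m x)"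
    by (rule ev_superset) (auto simp: keys_add)
  also have "\<dots> = (\<Sum>m\<in>?S. Poly_Mapping.lookup p m * mon_ev m x) + (\<Sum>m\<in>?S. Poly_Mapping.lookup q m * mon_ev m x)"
    by (simp add: lookup_add distrib_right sum.distrib)
  also have "\<dots> = mpoly_eval p x + mpoly_eval q x"
    using ev_superset[of ?S p x] ev_superset[of ?S q x] by simp
  finally show ?thesis .
qed

lemma ev_zero: "mpoly_eval 0 x = 0"
  by (simp add: mpoly_eval_def)

lemma ev_sum: "mpoly_eval (sum pp A) x = (\<Sum>a\<in>A. mpoly_eval (pp a) (x::nat \<Rightarrow> 'a::comm_semiring_1))"
  by (induction A rule: infinite_finite_induct) (auto simp: ev_zero ev_add)

lemma ev_single: "mpoly_eval (Poly_Mapping.single m v) x = v * mon_ev m x"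
  by (simp add: mpoly_eval_def mon_ev_def)

lemma ev_neg: "mpoly_eval (- p) x = - mpoly_eval p (x::nat \<Rightarrow> 'a::comm_ring_1)"
  using ev_add[of p "-p" x] by (simp add: ev_zero eq_neg_iff_add_eq_0 add.commute)

lemma ev_diff: "mpoly_eval (p - q) x = mpoly_eval p x - mpoly_eval q (x::nat \<Rightarrow> 'a::comm_ring_1)"
  using ev_add[of p "-q" x] ev_neg[of q x] by simp

lemma mpoly_expand: "p = (\<Sum>k\<in>Poly_Mapping.keys p. Poly_Mapping.single k (Poly_Mapping.lookup p k))"
  by (rule poly_mapping_eqI) (auto simp: lookup_sum lookup_single when_def in_keys_iff)

lemma ev_mult: "mpoly_eval (p * q) x = mpoly_eval p x * mpoly_eval q (x::nat \<Rightarrow> 'a::comm_semiring_1)"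
proof -
  have "p * q = (\<Sum>k\<in>Poly_Mapping.keys p. Poly_Mapping.single k (Poly_Mapping.lookup p k)) *
     (\<Sum>l\<in>Poly_Mapping.keys q. Poly_Mapping.single l (Poly_Mapping.lookup q l))"
    by (subst mpoly_expand[of p], subst mpoly_expand[of q]) (rule refl)
  also have "\<dots> = (\<Sum>k\<in>Poly_Mapping.keys p. \<Sum>l\<in>Poly_Mapping.keys q.
      Poly_Mapping.single (k + l) (Poly_Mapping.lookup p k * Poly_Mapping.lookup q l))"
    by (simp add: sum_product mult_single)
  finally have "mpoly_eval (p * q) x = (\<Sum>k\<in>Poly_Mapping.keys p. \<Sum>l\<in>Poly_Mapping.keys q.
      (Poly_Mapping.lookup p k * Poly_Mapping.lookup q l) * mon_ev (k + l) x)"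
    by (simp add: ev_sum ev_single)
  also have "\<dots> = (\<Sum>k\<in>Poly_Mapping.keys p. Poly_Mapping.lookup p k * mon_ev k x) *
      (\<Sum>l\<in>Poly_Mapping.keys q. Poly_Mapping.lookup q l * mon_ev l x)"
    by (simp add: sum_product mon_ev_add mult_ac)
  finally show ?thesis by (simp add: mpoly_eval_def mon_ev_def)
qed

lemma ev_const: "mpoly_eval (mpoly_const c) x = c"
  by (simp add: mpoly_const_def ev_single mon_ev_def)

lemma ev_poly_in_var: "mpoly_eval (poly_in_var k f) x = poly f (x k)"
proof -
  have "mpoly_eval (poly_in_var k f) x = (\<Sum>i\<le>degree f. coeff f i * x k ^ i)"
    unfolding poly_in_var_def ev_sum ev_single
    by (intro sum.cong refl) (auto simp: mon_ev_def)
  then show ?thesis by (simp add: poly_altdef)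
qed

lemma ev_in_vars: "mpoly_in_vars n g \<Longrightarrow> (\<And>i. i < n \<Longrightarrow> x i = y i) \<Longrightarrow> mpoly_eval g x = mpoly_eval g y"
  unfolding mpoly_eval_def mpoly_in_vars_def
  apply (intro sum.cong refl arg_cong2[where f="(*)"] prod.cong)
  by (metis lessThan_iff subsetD)


theorem mainTheorem6:
  fixes g :: "'a::{finite,field} mpoly" and f :: "'a poly" and a :: 'a and n :: nat
  assumes "odd (card (UNIV::'a set))"
    and "n \<ge> 1"
    and "mpoly_in_vars n g"
    and "total_degree g = n * (card (UNIV::'a set) - 1) div 2"
    and "is_pp f"
    and "degree f = card (UNIV::'a set) - 2"
    and "\<not> (\<exists>b::'a. b ^ 2 = a)"
  shows "is_mpp (n + 1) ((g * g - mpoly_const a) * poly_in_var n f)"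
proof -
  define G where "G x = mpoly_eval g x" for x
  have bij: "bij (poly f)" using assms(5) by (simp add: is_pp_def)
  have nz: "G x * G x - a \<noteq> 0" for x
    using assms(7) by (metis eq_iff_diff_eq_0 power2_eq_square)
  have Gv: "G x = G y" if "\<And>i. i < n \<Longrightarrow> x i = y i" for x y
    unfolding G_def by (rule ev_in_vars[OF assms(3)]) (use that in auto)
  have ev: "mpoly_eval ((g * g - mpoly_const a) * poly_in_var n f) x = (G x * G x - a) * poly f (x n)" for x
    by (simp add: ev_mult ev_diff ev_const ev_poly_in_var G_def)
  show ?thesis unfolding is_mpp_def
  proof
    fix c :: 'a
    define S where "S = {x \<in> PiE {..<n+1} (\<lambda>_. UNIV). mpoly_eval ((g * g - mpoly_const a) * poly_in_var n f) x = c}"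
    define \<phi> where "\<phi> x' = inv (poly f) (c / (G x' * G x' - a))" for x'
    have key: "(G x * G x - a) * poly f y = c \<longleftrightarrow> y = \<phi> x" for x y
    proof -
      have "(G x * G x - a) * poly f y = c \<longleftrightarrow> poly f y = c / (G x * G x - a)"
        using nz[of x] by (auto simp: field_simps)
      also have "\<dots> \<longleftrightarrow> y = \<phi> x"
        unfolding \<phi>_def using bij by (metis bij_inv_eq_iff)
      finally show ?thesis .
    qed
    have Sdef: "S = {x \<in> PiE {..<n+1} (\<lambda>_. UNIV). x n = \<phi> x}"
      unfolding S_def ev key by simp
    have bb: "bij_betw (\<lambda>x. restrict x {..<n}) S (PiE {..<n} (\<lambda>_. UNIV))"
    proof (rule bij_betw_byWitness[where f'="\<lambda>x'. x'(n := \<phi> x')"])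
      show "\<forall>x\<in>S. (restrict x {..<n})(n := \<phi> (restrict x {..<n})) = x"
      proof
        fix x assume x: "x \<in> S"
        have "\<phi> (restrict x {..<n}) = \<phi> x" unfolding \<phi>_def using Gv[of "restrict x {..<n}" x] by auto
        then show "(restrict x {..<n})(n := \<phi> (restrict x {..<n})) = x"
          using x unfolding Sdef by (auto simp: PiE_def extensional_def fun_eq_iff)
      qed
      show "\<forall>x'\<in>PiE {..<n} (\<lambda>_. UNIV). restrict (x'(n := \<phi> x')) {..<n} = x'"
        by (auto simp: PiE_def extensional_def fun_eq_iff)
      show "(\<lambda>x. restrict x {..<n}) ` S \<subseteq> PiE {..<n} (\<lambda>_. UNIV)"
        by (auto simp: PiE_def extensional_def)
      show "(\<lambda>x'. x'(n := \<phi> x')) ` PiE {..<n} (\<lambda>_. UNIV) \<subseteq> S"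
      proof
        fix y assume "y \<in> (\<lambda>x'. x'(n := \<phi> x')) ` PiE {..<n} (\<lambda>_. UNIV)"
        then obtain x' where x': "x' \<in> PiE {..<n} (\<lambda>_. UNIV)" and y: "y = x'(n := \<phi> x')" by auto
        have "G (x'(n := \<phi> x')) = G x'" by (rule Gv) auto
        then have "\<phi> (x'(n := \<phi> x')) = \<phi> x'" by (simp only: \<phi>_def)
        then show "y \<in> S" using x' unfolding Sdef y by (auto simp: PiE_def extensional_def)
      qed
    qed
    have "card S = card (PiE {..<n} (\<lambda>_. UNIV::'a set))"
      using bij_betw_same_card[OF bb] .
    also have "\<dots> = card (UNIV::'a set) ^ n"
      by (simp add: card_PiE)
    finally show "card S = card (UNIV::'a set) ^ (n + 1 - 1)" by simp
  qed
qed

end
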